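(* For every positive integer $k$ there exists a nonzero integer $s$ such that, for every $1\le i\le k$, $s^2$ can be written as a sum of $i$ squares of nonzero integers. *)

theory Defs
  imports Main
begin

end

theory Submission
  imports Defs
begin

lemma step:
  fixes a :: "nat \<Rightarrow> int" and n :: nat
  assumes n: "n \<ge> 1" and nz: "\<forall>j<n. a j \<noteq> 0" and s: "t ^ 2 = (\<Sum>j<n. (a j) ^ 2)"
  shows "\<exists>b :: nat \<Rightarrow> int. (\<forall>j<Suc n. b j \<noteq> 0) \<and> (5*t) ^ 2 = (\<Sum>j<Suc n. (b j) ^ 2)"
proof -
  define b where "b j = (if j = n then 4 * a 0 else if j = 0 then 3 * a 0 else 5 * a j)" for j
  have a0: "a 0 \<noteq> 0" using nz n by auto
  have nzb: "\<forall>j<Suc n. b j \<noteq> 0" using nz a0 by (auto simp: b_def)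
  have "(\<Sum>j<n. (b j) ^ 2) = (\<Sum>j<n. 25 * (a j)^2 - (if j = 0 then 16 * (a 0)^2 else 0))"
    by (rule sum.cong) (auto simp: b_def power2_eq_square)
  also have "\<dots> = 25 * (\<Sum>j<n. (a j)^2) - 16 * (a 0)^2"
    using n by (simp add: sum_subtractf sum_distrib_left)
  finally have "(\<Sum>j<Suc n. (b j) ^ 2) = 25 * (\<Sum>j<n. (a j)^2) - 16 * (a 0)^2 + 16 * (a 0)^2"
    by (simp add: b_def power2_eq_square)
  hence "(5*t) ^ 2 = (\<Sum>j<Suc n. (b j) ^ 2)" using s by (simp add: power_mult_distrib)
  thus ?thesis using nzb by blast
qed

lemma main:
  "\<forall>i\<in>{1..Suc m}. \<exists>a :: nat \<Rightarrow> int. (\<forall>j<i. a j \<noteq> 0) \<and> ((5::int)^m) ^ 2 = (\<Sum>j<i. (a j) ^ 2)"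
proof (induction m)
  case 0
  then show ?case by (auto intro!: exI[of _ "\<lambda>_. 1"])
next
  case (Suc m)
  show ?case
  proof
    fix i assume i: "i \<in> {1..Suc (Suc m)}"
    show "\<exists>a :: nat \<Rightarrow> int. (\<forall>j<i. a j \<noteq> 0) \<and> ((5::int)^Suc m) ^ 2 = (\<Sum>j<i. (a j) ^ 2)"
    proof (cases "i = 1")
      case True
      then show ?thesis by (auto intro!: exI[of _ "\<lambda>_. 5 ^ Suc m"])
    next
      case False
      then obtain n where n: "i = Suc n" "n \<ge> 1" "n \<in> {1..Suc m}" using i by (cases i) auto
      then obtain a where "\<forall>j<n. a j \<noteq> 0" "((5::int)^m) ^ 2 = (\<Sum>j<n. (a j) ^ 2)"
        using Suc.IH by blast
      from step[OF n(2) this] show ?thesis using n(1) by (simp add: mult.commute)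
    qed
  qed
qed

theorem lemma7p2:
  fixes k :: nat
  assumes "k \<ge> 1"
  shows "\<exists>s::int. s \<noteq> 0 \<and>
           (\<forall>i\<in>{1..k}. \<exists>a :: nat \<Rightarrow> int.
              (\<forall>j<i. a j \<noteq> 0) \<and> s ^ 2 = (\<Sum>j<i. (a j) ^ 2))"
proof -
  obtain m where k: "k = Suc m" using assms by (cases k) auto
  show ?thesis using main[of m] k by (intro exI[of _ "5^m"]) auto
qed

end
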